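(* Let $\theta\in(0,\pi/2)$. For a qubit operator write $\rho=\tfrac12(\mathbb{1}+x\hat X+z\hat Z)$ with Pauli operators $\hat X,\hat Z$. Consider the pure states $|\psi\rangle\langle\psi|$, $|\bar\psi\rangle\langle\bar\psi|$, $|\phi\rangle\langle\phi|$, $|\bar\phi\rangle\langle\bar\phi|$ with Bloch vectors $(x,z)=(\sin\theta,\cos\theta)$, $(-\sin\theta,-\cos\theta)$, $(\sin\theta,-\cos\theta)$, $(-\sin\theta,\cos\theta)$ respectively, and the three binary measurements $M_\psi=\{|\psi\rangle\langle\psi|,|\bar\psi\rangle\langle\bar\psi|\}$, $M_\phi=\{|\phi\rangle\langle\phi|,|\bar\phi\rangle\langle\bar\phi|\}$, $M_g=\{E_{g_\psi},E_{g_\phi}\}$ with $E_{g_\psi}=|0\rangle\langle0|$, $E_{g_\phi}=|1\rangle\langle1|$ ($Z$ basis). For $r\in[0,1]$, replace every effect $E$ by $\mathcal{D}^{\mathrm{deph}}_r(E):=(1-r)E+r\sum_{i\in\{0,1\}}\langle i|E|i\rangle\,|i\rangle\langle i|$, keeping the four states unchanged. Then the minimal $r$ for which the resulting prepare-and-measure scenario admits a noncontextual ontological model is $$r^{\mathrm{deph}}_{\min}=1-\frac{1-\cos\theta}{\sin^2\theta}.$$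
   Context: A noncontextual ontological model for a quantum prepare-and-measure scenario consisting of a finite set $\mathcal{S}$ of density operators and a finite set $\mathcal{E}$ of effects (the elements of finitely many POVMs) is: a finite set $\Lambda$; a map $\rho\mapsto\mu_\rho$ from the convex hull of $\mathcal{S}$ to probability distributions on $\Lambda$ that is convex-linear; and a map $E\mapsto\xi_E$ from the convex hull of $\mathcal{E}\cup\{0,\mathbb{1}\}$ to functions $\Lambda\to[0,1]$ that is convex-linear with $\xi_{\mathbb{1}}\equiv1$; such that $\mathrm{Tr}(E\rho)=\sum_{\lambda}\xi_E(\lambda)\mu_\rho(\lambda)$ for all $\rho\in\mathcal{S}$, $E\in\mathcal{E}$. Convex-linearity encodes noncontextuality: operationally equivalent (equal-operator) mixtures receive identical ontological representations. *)

theory Defs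
  imports "HOL-Analysis.Analysis"
begin

type_synonym qop = "complex^2^2"

definition qtr :: "qop \<Rightarrow> complex" where
  "qtr A = A $ 1 $ 1 + A $ 2 $ 2"

definition pauliX :: qop where
  "pauliX = (\<chi> i j. if i = j then 0 else 1)"

definition pauliZ :: qop where
  "pauliZ = (\<chi> i j. if i = j then (if i = 1 then 1 else -1) else 0)"

definition bloch :: "real \<Rightarrow> real \<Rightarrow> qop" where
  "bloch x z = (1/2::real) *\<^sub>R (mat 1 + x *\<^sub>R pauliX + z *\<^sub>R pauliZ)"

definition proj0 :: qop where
  "proj0 = (\<chi> i j. if i = 1 \<and> j = 1 then 1 else 0)"

definition proj1 :: qop where
  "proj1 = (\<chi> i j. if i = 2 \<and> j = 2 then 1 else 0)"

definition deph :: "real \<Rightarrow> qop \<Rightarrow> qop" where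
  "deph r E = (1 - r) *\<^sub>R E + r *\<^sub>R (\<chi> i j. if i = j then E $ i $ i else 0)"

text \<open>The ontic space is a finite set of
  naturals (any finite set is equipotent to one).\<close>
definition nc_model :: "qop set \<Rightarrow> qop set \<Rightarrow> bool" where
  "nc_model S E \<longleftrightarrow>
    (\<exists>(\<Lambda>::nat set) (\<mu>::qop \<Rightarrow> nat \<Rightarrow> real) (\<xi>::qop \<Rightarrow> nat \<Rightarrow> real).
      finite \<Lambda> \<and>
      (\<forall>\<rho>\<in>convex hull S. (\<forall>l\<in>\<Lambda>. 0 \<le> \<mu> \<rho> l) \<and> (\<Sum>l\<in>\<Lambda>. \<mu> \<rho> l) = 1) \<and>
      (\<forall>a\<in>convex hull S. \<forall>b\<in>convex hull S. \<forall>t::real. 0 \<le> t \<and> t \<le> 1 \<longrightarrow>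
         (\<forall>l\<in>\<Lambda>. \<mu> (t *\<^sub>R a + (1 - t) *\<^sub>R b) l = t * \<mu> a l + (1 - t) * \<mu> b l)) \<and>
      (\<forall>e\<in>convex hull (E \<union> {0, mat 1}). \<forall>l\<in>\<Lambda>. 0 \<le> \<xi> e l \<and> \<xi> e l \<le> 1) \<and>
      (\<forall>a\<in>convex hull (E \<union> {0, mat 1}). \<forall>b\<in>convex hull (E \<union> {0, mat 1}).
         \<forall>t::real. 0 \<le> t \<and> t \<le> 1 \<longrightarrow>
         (\<forall>l\<in>\<Lambda>. \<xi> (t *\<^sub>R a + (1 - t) *\<^sub>R b) l = t * \<xi> a l + (1 - t) * \<xi> b l)) \<and>
      (\<forall>l\<in>\<Lambda>. \<xi> (mat 1) l = 1) \<and>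
      (\<forall>\<rho>\<in>S. \<forall>e\<in>E. qtr (e ** \<rho>) = complex_of_real (\<Sum>l\<in>\<Lambda>. \<xi> e l * \<mu> \<rho> l)))"

definition states :: "real \<Rightarrow> qop set" where
  "states \<theta> = {bloch (sin \<theta>) (cos \<theta>), bloch (- sin \<theta>) (- cos \<theta>),
               bloch (sin \<theta>) (- cos \<theta>), bloch (- sin \<theta>) (cos \<theta>)}"

text \<open>Effects of M_psi, M_phi (the state projectors) and M_g (Z basis), each dephased.\<close>
definition deph_effects :: "real \<Rightarrow> real \<Rightarrow> qop set" where
  "deph_effects \<theta> r = deph r ` (states \<theta> \<union> {proj0, proj1})"

end

theory Submission
  imports Defs
begin


lemma bloch_c: "bloch x z $ i $ j =
  (if i = 1 then (if j = 1 then complex_of_real ((1+z)/2) else complex_of_real (x/2))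
   else (if j = 1 then complex_of_real (x/2) else complex_of_real ((1-z)/2)))"
  using exhaust_2[of i] exhaust_2[of j]
  by (auto simp: bloch_def pauliX_def pauliZ_def mat_def) (auto simp: scaleR_conv_of_real field_simps)

lemma qtr_mult: "qtr (A ** B) = A$1$1*B$1$1 + A$1$(2::2)*B$2$1 + A$2$1*B$1$2 + A$(2::2)$2*B$2$2"
  by (simp add: qtr_def matrix_matrix_mult_def sum_2)

lemma qtr_bloch: "qtr (bloch a b ** bloch x z) = complex_of_real ((1 + a*x + b*z)/2)"
  unfolding qtr_mult bloch_c by (simp add: field_simps)

lemma mat_eqI: "(\<And>i j. (A::qop) $ i $ j = B $ i $ j) \<Longrightarrow> A = B"
  by (simp add: vec_eq_iff)

lemma deph_bloch: "deph r (bloch x z) = bloch ((1-r)*x) z"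
  apply (rule mat_eqI)
  subgoal for i j
  using exhaust_2[of i] exhaust_2[of j]
  by (auto simp: deph_def bloch_c) (auto simp: scaleR_conv_of_real field_simps)
  done

lemma proj0_bloch: "proj0 = bloch 0 1"
  apply (rule mat_eqI)
  subgoal for i j
  using exhaust_2[of i] exhaust_2[of j]
  by (auto simp: proj0_def bloch_c)
  done

lemma proj1_bloch: "proj1 = bloch 0 (-1)"
  apply (rule mat_eqI)
  subgoal for i j
  using exhaust_2[of i] exhaust_2[of j]
  by (auto simp: proj1_def bloch_c)
  done

lemma bloch_comb: "t *\<^sub>R bloch x z + (1-t) *\<^sub>R bloch x' z' = bloch (t*x+(1-t)*x') (t*z+(1-t)*z')"
  apply (rule mat_eqI)
  subgoal for i j
  using exhaust_2[of i] exhaust_2[of j]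
  by (auto simp: bloch_c) (auto simp: scaleR_conv_of_real field_simps)
  done



lemma key_ineq:
  fixes m1 m2 m3 m4 u v w :: real
  assumes "0 \<le> m1" "0 \<le> m2" "0 \<le> m3" "0 \<le> m4" "m1 + m2 = m3 + m4"
    "0 \<le> u" "u \<le> 1" "0 \<le> v" "v \<le> 1" "0 \<le> w" "w \<le> 1"
  shows "(m1-m2)*(u-v+2*w-1) + (m4-m3)*(v-u+2*w-1) \<le> 2*(m1+m2)"
proof -
  define P where "P = u-v+2*w-1"
  define Q where "Q = v-u+2*w-1"
  have PQ: "\<bar>P\<bar> + \<bar>Q\<bar> \<le> 2" unfolding P_def Q_def using assms by linarith
  have 1: "(m1-m2)*P \<le> (m1+m2)*\<bar>P\<bar>"
  proof -
    have "(m1-m2)*P \<le> \<bar>(m1-m2)*P\<bar>" by simp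
    also have "\<dots> = \<bar>m1-m2\<bar>*\<bar>P\<bar>" by (simp add: abs_mult)
    also have "\<dots> \<le> (m1+m2)*\<bar>P\<bar>" by (rule mult_right_mono) (use assms in auto)
    finally show ?thesis .
  qed
  have 2: "(m4-m3)*Q \<le> (m1+m2)*\<bar>Q\<bar>"
  proof -
    have "(m4-m3)*Q \<le> \<bar>(m4-m3)*Q\<bar>" by simp
    also have "\<dots> = \<bar>m4-m3\<bar>*\<bar>Q\<bar>" by (simp add: abs_mult)
    also have "\<dots> \<le> (m1+m2)*\<bar>Q\<bar>" by (rule mult_right_mono) (use assms in auto)
    finally show ?thesis .
  qed
  have 3: "(m1+m2)*\<bar>P\<bar> + (m1+m2)*\<bar>Q\<bar> \<le> 2*(m1+m2)"
    using mult_left_mono[OF PQ, of "m1+m2"] assms by (simp add: algebra_simps)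
  show ?thesis using 1 2 3 unfolding P_def Q_def by linarith
qed

lemma lower:
  assumes "0 < \<theta>" "\<theta> < pi/2" "nc_model (states \<theta>) (deph_effects \<theta> r)"
  shows "(1-r) * sin \<theta> * sin \<theta> + cos \<theta> \<le> 1"
proof -
  obtain \<Lambda> :: "nat set" and \<mu> \<xi> where fin: "finite \<Lambda>"
    and muh: "\<forall>\<rho>\<in>convex hull (states \<theta>). (\<forall>l\<in>\<Lambda>. 0 \<le> \<mu> \<rho> l) \<and> (\<Sum>l\<in>\<Lambda>. \<mu> \<rho> l) = 1"
    and mul: "\<forall>a\<in>convex hull (states \<theta>). \<forall>b\<in>convex hull (states \<theta>). \<forall>t::real. 0 \<le> t \<and> t \<le> 1 \<longrightarrow>
         (\<forall>l\<in>\<Lambda>. \<mu> (t *\<^sub>R a + (1 - t) *\<^sub>R b) l = t * \<mu> a l + (1 - t) * \<mu> b l)"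
    and xib: "\<forall>e\<in>convex hull (deph_effects \<theta> r \<union> {0, mat 1}). \<forall>l\<in>\<Lambda>. 0 \<le> \<xi> e l \<and> \<xi> e l \<le> 1"
    and rep: "\<forall>\<rho>\<in>states \<theta>. \<forall>e\<in>deph_effects \<theta> r. qtr (e ** \<rho>) = complex_of_real (\<Sum>l\<in>\<Lambda>. \<xi> e l * \<mu> \<rho> l)"
    using assms(3) unfolding nc_model_def by blast
  define s where "s = sin \<theta>"
  define c where "c = cos \<theta>"
  define aa where "aa = (1 - r) * s"
  define P1 where "P1 = bloch s c"
  define P2 where "P2 = bloch (-s) (-c)"
  define P3 where "P3 = bloch s (-c)"
  define P4 where "P4 = bloch (-s) c"
  define Eu where "Eu = bloch aa c"
  define Ev where "Ev = bloch (-aa) c"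
  define Ew where "Ew = bloch 0 1"
  have S: "P1 \<in> states \<theta>" "P2 \<in> states \<theta>" "P3 \<in> states \<theta>" "P4 \<in> states \<theta>"
    unfolding states_def P1_def P2_def P3_def P4_def s_def c_def by blast+
  have SH: "P1 \<in> convex hull states \<theta>" "P2 \<in> convex hull states \<theta>"
     "P3 \<in> convex hull states \<theta>" "P4 \<in> convex hull states \<theta>"
    using S hull_subset[of "states \<theta>" convex] by auto
  have E: "Eu \<in> deph_effects \<theta> r" "Ev \<in> deph_effects \<theta> r" "Ew \<in> deph_effects \<theta> r"
  proof -
    have "Eu = deph r P1" unfolding Eu_def P1_def aa_def deph_bloch by simp
    then show "Eu \<in> deph_effects \<theta> r" unfolding deph_effects_def using S(1) by (intro image_eqI[where x=P1]) auto
    have "Ev = deph r P4" unfolding Ev_def P4_def aa_def deph_bloch by simp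
    then show "Ev \<in> deph_effects \<theta> r" unfolding deph_effects_def using S(4) by (intro image_eqI[where x=P4]) auto
    have "Ew = deph r proj0" unfolding Ew_def proj0_bloch deph_bloch by simp
    then show "Ew \<in> deph_effects \<theta> r" unfolding deph_effects_def by (intro image_eqI[where x=proj0]) auto
  qed
  have EH: "e \<in> convex hull (deph_effects \<theta> r \<union> {0, mat 1})" if "e \<in> deph_effects \<theta> r" for e
    using that hull_subset[of "deph_effects \<theta> r \<union> {0, mat 1}" convex] by auto
  have R: "(\<Sum>l\<in>\<Lambda>. \<xi> (bloch x' z') l * \<mu> (bloch x z) l) = (1 + x'*x + z'*z)/2"
    if "bloch x z \<in> states \<theta>" "bloch x' z' \<in> deph_effects \<theta> r" for x z x' z'
  proof -
    have "qtr (bloch x' z' ** bloch x z) = complex_of_real (\<Sum>l\<in>\<Lambda>. \<xi> (bloch x' z') l * \<mu> (bloch x z) l)"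
      using rep that by blast
    then show ?thesis unfolding qtr_bloch of_real_eq_iff by simp
  qed
  have mid: "\<mu> P1 l + \<mu> P2 l = \<mu> P3 l + \<mu> P4 l" if "l \<in> \<Lambda>" for l
  proof -
    have "(1/2::real) *\<^sub>R P1 + (1 - 1/2) *\<^sub>R P2 = (1/2::real) *\<^sub>R P3 + (1 - 1/2) *\<^sub>R P4"
      unfolding P1_def P2_def P3_def P4_def bloch_comb by simp
    moreover have "\<mu> ((1/2::real) *\<^sub>R P1 + (1 - 1/2) *\<^sub>R P2) l = 1/2 * \<mu> P1 l + (1-1/2) * \<mu> P2 l"
      by (rule mul[rule_format]) (use SH that in auto)
    moreover have "\<mu> ((1/2::real) *\<^sub>R P3 + (1 - 1/2) *\<^sub>R P4) l = 1/2 * \<mu> P3 l + (1-1/2) * \<mu> P4 l"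
      by (rule mul[rule_format]) (use SH that in auto)
    ultimately show ?thesis by simp
  qed
  have per: "(\<mu> P1 l - \<mu> P2 l)*(\<xi> Eu l - \<xi> Ev l + 2*\<xi> Ew l - 1)
      + (\<mu> P4 l - \<mu> P3 l)*(\<xi> Ev l - \<xi> Eu l + 2*\<xi> Ew l - 1) \<le> 2*(\<mu> P1 l + \<mu> P2 l)"
    if "l \<in> \<Lambda>" for l
    apply (rule key_ineq)
    using muh SH that mid[OF that] xib EH[OF E(1)] EH[OF E(2)] EH[OF E(3)] by auto
  have sumle: "(\<Sum>l\<in>\<Lambda>. (\<mu> P1 l - \<mu> P2 l)*(\<xi> Eu l - \<xi> Ev l + 2*\<xi> Ew l - 1)
      + (\<mu> P4 l - \<mu> P3 l)*(\<xi> Ev l - \<xi> Eu l + 2*\<xi> Ew l - 1)) \<le> (\<Sum>l\<in>\<Lambda>. 2*(\<mu> P1 l + \<mu> P2 l))"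
    by (rule sum_mono) (use per in auto)
  have r4: "(\<Sum>l\<in>\<Lambda>. 2*(\<mu> P1 l + \<mu> P2 l)) = 4"
    using muh SH by (simp add: sum.distrib sum_distrib_left[symmetric])
  let ?f = "\<lambda>e p. \<Sum>l\<in>\<Lambda>. \<xi> e l * \<mu> p l"
  have expand: "(\<Sum>l\<in>\<Lambda>. (\<mu> P1 l - \<mu> P2 l)*(\<xi> Eu l - \<xi> Ev l + 2*\<xi> Ew l - 1)
      + (\<mu> P4 l - \<mu> P3 l)*(\<xi> Ev l - \<xi> Eu l + 2*\<xi> Ew l - 1)) =
      ?f Eu P1 - ?f Eu P2 - ?f Ev P1 + ?f Ev P2 + 2 * ?f Ew P1 - 2 * ?f Ew P2
      - (\<Sum>l\<in>\<Lambda>. \<mu> P1 l) + (\<Sum>l\<in>\<Lambda>. \<mu> P2 l)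
      + ?f Ev P4 - ?f Ev P3 - ?f Eu P4 + ?f Eu P3 + 2 * ?f Ew P4 - 2 * ?f Ew P3
      - (\<Sum>l\<in>\<Lambda>. \<mu> P4 l) + (\<Sum>l\<in>\<Lambda>. \<mu> P3 l)"
    by (simp add: sum.distrib sum_subtractf sum_distrib_left algebra_simps)
  have vals: "?f Eu P1 = (1 + aa * s + c * c)/2" "?f Eu P2 = (1 - aa * s - c * c)/2"
     "?f Ev P1 = (1 - aa * s + c * c)/2" "?f Ev P2 = (1 + aa * s - c * c)/2"
     "?f Ew P1 = (1 + c)/2" "?f Ew P2 = (1 - c)/2"
     "?f Ev P4 = (1 + aa * s + c * c)/2" "?f Ev P3 = (1 - aa * s - c * c)/2"
     "?f Eu P4 = (1 - aa * s + c * c)/2" "?f Eu P3 = (1 + aa * s - c * c)/2"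
     "?f Ew P4 = (1 + c)/2" "?f Ew P3 = (1 - c)/2"
    using R[OF S(1)[unfolded P1_def] E(1)[unfolded Eu_def]] R[OF S(2)[unfolded P2_def] E(1)[unfolded Eu_def]]
      R[OF S(1)[unfolded P1_def] E(2)[unfolded Ev_def]] R[OF S(2)[unfolded P2_def] E(2)[unfolded Ev_def]]
      R[OF S(1)[unfolded P1_def] E(3)[unfolded Ew_def]] R[OF S(2)[unfolded P2_def] E(3)[unfolded Ew_def]]
      R[OF S(4)[unfolded P4_def] E(2)[unfolded Ev_def]] R[OF S(3)[unfolded P3_def] E(2)[unfolded Ev_def]]
      R[OF S(4)[unfolded P4_def] E(1)[unfolded Eu_def]] R[OF S(3)[unfolded P3_def] E(1)[unfolded Eu_def]]
      R[OF S(4)[unfolded P4_def] E(3)[unfolded Ew_def]] R[OF S(3)[unfolded P3_def] E(3)[unfolded Ew_def]]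
    unfolding P1_def P2_def P3_def P4_def Eu_def Ev_def Ew_def by (simp_all add: algebra_simps)
  have ones: "(\<Sum>l\<in>\<Lambda>. \<mu> P1 l) = 1" "(\<Sum>l\<in>\<Lambda>. \<mu> P2 l) = 1"
      "(\<Sum>l\<in>\<Lambda>. \<mu> P3 l) = 1" "(\<Sum>l\<in>\<Lambda>. \<mu> P4 l) = 1"
    using muh SH by auto
  have "4*aa * s + 4*c \<le> 4" using sumle r4 unfolding expand vals ones by (simp add: algebra_simps)
  then show ?thesis unfolding aa_def s_def c_def by (simp add: algebra_simps)
qed



definition lf :: "real \<Rightarrow> real \<Rightarrow> real \<Rightarrow> qop \<Rightarrow> real" where
  "lf p q k A = p * Re (A$1$1) + q * Re (A$2$2) + k * Re (A$1$2)"

lemma lf_lin: "lf p q k (u *\<^sub>R A + v *\<^sub>R B) = u * lf p q k A + v * lf p q k B"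
  by (simp add: lf_def algebra_simps)

lemma lf_bloch: "lf p q k (bloch x z) = p*(1+z)/2 + q*(1-z)/2 + k*x/2"
  by (simp add: lf_def bloch_c)

lemma lf_zero: "lf p q k 0 = 0"
  by (simp add: lf_def)

lemma lf_one: "lf p q k (mat 1) = p + q"
  by (simp add: lf_def mat_def)

lemma lf_hull:
  assumes "\<forall>x\<in>S. a \<le> lf p q k x \<and> lf p q k x \<le> b" "y \<in> convex hull S"
  shows "a \<le> lf p q k y \<and> lf p q k y \<le> b"
proof -
  let ?T = "{x. a \<le> lf p q k x \<and> lf p q k x \<le> b}"
  have "convex ?T"
  proof (rule convexI)
    fix x y' and u v :: real
    assume xy: "x \<in> ?T" "y' \<in> ?T" and uv: "0 \<le> u" "0 \<le> v" "u + v = 1"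
    then have "u * a \<le> u * lf p q k x" "v * a \<le> v * lf p q k y'"
              "u * lf p q k x \<le> u * b" "v * lf p q k y' \<le> v * b"
      by (auto intro: mult_left_mono)
    moreover have "u * a + v * a = a" "u * b + v * b = b" using uv by (metis distrib_right mult_1)+
    ultimately show "u *\<^sub>R x + v *\<^sub>R y' \<in> ?T" by (auto simp: lf_lin)
  qed
  moreover have "S \<subseteq> ?T" using assms(1) by auto
  ultimately have "convex hull S \<subseteq> ?T" by (rule hull_minimal[rotated])
  then show ?thesis using assms(2) by auto
qed



lemma trig_facts:
  assumes "0 < \<theta>" "\<theta> < pi/2"
  shows "0 < sin \<theta>" "0 < cos \<theta>" "cos \<theta> < 1" "(sin \<theta>)^2 = 1 - (cos \<theta>)^2"
proof -
  show s: "0 < sin \<theta>" using assms by (intro sin_gt_zero) auto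
  show "0 < cos \<theta>" using assms by (intro cos_gt_zero) auto
  show sq: "(sin \<theta>)^2 = 1 - (cos \<theta>)^2" using sin_cos_squared_add[of \<theta>] by linarith
  show "cos \<theta> < 1"
  proof (rule ccontr)
    assume "\<not> cos \<theta> < 1"
    then have "cos \<theta> = 1" using cos_le_one[of \<theta>] by linarith
    then show False using sq s by simp
  qed
qed

lemma upper:
  assumes "0 < \<theta>" "\<theta> < pi/2"
  shows "nc_model (states \<theta>) (deph_effects \<theta> (1 - (1 - cos \<theta>) / (sin \<theta>)\<^sup>2))"
proof -
  define s where "s = sin \<theta>"
  define c where "c = cos \<theta>"
  have sp: "0 < s" and cp: "0 < c" and c1: "c < 1" and sq: "s^2 = 1 - c^2"
    using trig_facts[OF assms] unfolding s_def c_def by auto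
  define r0 where "r0 = 1 - (1 - cos \<theta>) / (sin \<theta>)\<^sup>2"
  define K where "K = (1 + c) / s"
  define J where "J = (1 - c) / s"
  have KJ: "K * J = 1" unfolding K_def J_def using sp sq
    by (simp add: field_simps power2_eq_square)
  have Js: "J * s = 1 - c" unfolding J_def using sp by simp
  have Kr: "K * ((1 - r0) * s) = 1"
  proof -
    have "1 - r0 = (1 - c) / s^2" unfolding r0_def s_def c_def by simp
    then have "K * ((1 - r0) * s) = K * ((1 - c) / s)" using sp by (simp add: power2_eq_square)
    also have "\<dots> = K * J" unfolding J_def ..
    finally show ?thesis using KJ by simp
  qed
  define mp :: "nat \<Rightarrow> real" where "mp l = (if l = 0 then (c+1)/2 else if l = 1 then (c-1)/2 else (1-c)/2)" for l
  define mq :: "nat \<Rightarrow> real" where "mq l = (if l = 0 then (c-1)/2 else if l = 1 then (c+1)/2 else (1-c)/2)" for l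
  define mk :: "nat \<Rightarrow> real" where "mk l = (if l \<le> 1 then 0 else if l = 2 then J else -J)" for l
  define xp :: "nat \<Rightarrow> real" where "xp l = (if l = 0 then 1 else if l = 1 then 0 else 1/2)" for l
  define xq :: "nat \<Rightarrow> real" where "xq l = (if l = 0 then 0 else if l = 1 then 1 else 1/2)" for l
  define xk :: "nat \<Rightarrow> real" where "xk l = (if l \<le> 1 then 0 else if l = 2 then K else -K)" for l
  define \<Lambda> :: "nat set" where "\<Lambda> = {0,1,2,3}"
  define \<mu> where "\<mu> \<rho> l = lf (mp l) (mq l) (mk l) \<rho>" for \<rho> l
  define \<xi> where "\<xi> e l = lf (xp l) (xq l) (xk l) e" for e l
  have states_b: "\<exists>x z. \<rho> = bloch x z" if "\<rho> \<in> states \<theta>" for \<rho>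
    using that unfolding states_def by (elim insertE emptyE; blast)
  have eff_b: "\<exists>y z. e = bloch y z \<and> \<bar>z\<bar> \<le> 1 \<and> \<bar>K * y\<bar> \<le> 1" if e_in: "e \<in> deph_effects \<theta> r0" for e
  proof -
    obtain x where x2: "e = deph r0 x" and x1: "x \<in> states \<theta> \<union> {proj0, proj1}"
      using e_in unfolding deph_effects_def by (rule imageE)
    have c1': "\<bar>c\<bar> \<le> 1" using cp c1 by simp
    have Kr': "K * ((1 - r0) * - s) = -1" using Kr by (simp add: algebra_simps)
    have gen: "\<And>y z. \<bar>z\<bar> \<le> 1 \<Longrightarrow> \<bar>K*y\<bar> \<le> 1 \<Longrightarrow> \<exists>y' z'. bloch y z = bloch y' z' \<and> \<bar>z'\<bar> \<le> 1 \<and> \<bar>K*y'\<bar> \<le> 1"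
      by blast
    show ?thesis using x1
      unfolding states_def s_def[symmetric] c_def[symmetric]
      using x2 Kr Kr' c1' gen
      by (auto simp: deph_bloch proj0_bloch proj1_bloch)
  qed
  have musum: "(\<Sum>l\<in>\<Lambda>. \<mu> \<rho> l) = lf 1 1 0 \<rho>" for \<rho>
    unfolding \<Lambda>_def \<mu>_def mp_def mq_def mk_def by (simp add: lf_def field_simps)
  have mu_states: "\<forall>x\<in>states \<theta>. 0 \<le> \<mu> x l \<and> \<mu> x l \<le> 1" if "l \<in> \<Lambda>" for l
  proof
    fix x assume "x \<in> states \<theta>"
    then have "x \<in> {bloch s c, bloch (-s) (-c), bloch s (-c), bloch (-s) c}"
      unfolding states_def s_def c_def .
    then show "0 \<le> \<mu> x l \<and> \<mu> x l \<le> 1"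
      using that cp c1 Js unfolding \<Lambda>_def \<mu>_def mp_def mq_def mk_def
      by (auto simp: lf_bloch field_simps)
  qed
  have one_states: "\<forall>x\<in>states \<theta>. 1 \<le> lf 1 1 0 x \<and> lf 1 1 0 x \<le> 1"
  proof
    fix x assume "x \<in> states \<theta>"
    then obtain a b where "x = bloch a b" using states_b by blast
    then show "1 \<le> lf 1 1 0 x \<and> lf 1 1 0 x \<le> 1" by (simp add: lf_bloch field_simps)
  qed
  have xi_gen: "\<forall>e\<in>deph_effects \<theta> r0 \<union> {0, mat 1}. 0 \<le> \<xi> e l \<and> \<xi> e l \<le> 1" if "l \<in> \<Lambda>" for l
  proof
    fix e assume e: "e \<in> deph_effects \<theta> r0 \<union> {0, mat 1}"
    show "0 \<le> \<xi> e l \<and> \<xi> e l \<le> 1"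
    proof (cases "e \<in> deph_effects \<theta> r0")
      case True
      then obtain y z where yz: "e = bloch y z" "\<bar>z\<bar> \<le> 1" "\<bar>K * y\<bar> \<le> 1" using eff_b by blast
      then show ?thesis using that unfolding \<Lambda>_def \<xi>_def xp_def xq_def xk_def
        by (auto simp: lf_bloch abs_le_iff field_simps)
    next
      case False
      then have "e = 0 \<or> e = mat 1" using e by blast
      then show ?thesis using that unfolding \<Lambda>_def \<xi>_def xp_def xq_def xk_def
        by (auto simp: lf_zero lf_one)
    qed
  qed
  have repro: "qtr (e ** \<rho>) = complex_of_real (\<Sum>l\<in>\<Lambda>. \<xi> e l * \<mu> \<rho> l)"
    if rs: "\<rho> \<in> states \<theta>" and es: "e \<in> deph_effects \<theta> r0" for \<rho> e
  proof -
    obtain x z where xz: "\<rho> = bloch x z" using states_b[OF rs] by blast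
    obtain y w where yw: "e = bloch y w" using eff_b[OF es] by blast
    have "(\<Sum>l\<in>\<Lambda>. \<xi> e l * \<mu> \<rho> l) = (1 + y*x + w*z)/2 + (K*J - 1) * (y*x)/2"
      unfolding xz yw \<Lambda>_def \<mu>_def \<xi>_def mp_def mq_def mk_def xp_def xq_def xk_def
      by (simp add: lf_bloch field_simps)
    then have h: "(\<Sum>l\<in>\<Lambda>. \<xi> e l * \<mu> \<rho> l) = (1 + y*x + w*z)/2" using KJ by simp
    show ?thesis unfolding h unfolding xz yw by (rule qtr_bloch)
  qed
  show ?thesis
    unfolding nc_model_def r0_def[symmetric]
  proof (intro exI conjI)
    show "finite \<Lambda>" unfolding \<Lambda>_def by simp
    show "\<forall>\<rho>\<in>convex hull states \<theta>. (\<forall>l\<in>\<Lambda>. 0 \<le> \<mu> \<rho> l) \<and> (\<Sum>l\<in>\<Lambda>. \<mu> \<rho> l) = 1"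
    proof (intro ballI conjI)
      fix \<rho> l assume h: "\<rho> \<in> convex hull states \<theta>" "l \<in> \<Lambda>"
      show "0 \<le> \<mu> \<rho> l" using lf_hull[OF mu_states[OF h(2), unfolded \<mu>_def] h(1)] h unfolding \<mu>_def by simp
    next
      fix \<rho> assume h: "\<rho> \<in> convex hull states \<theta>"
      show "(\<Sum>l\<in>\<Lambda>. \<mu> \<rho> l) = 1" unfolding musum using lf_hull[OF one_states h] by linarith
    qed
    show "\<forall>a\<in>convex hull states \<theta>. \<forall>b\<in>convex hull states \<theta>. \<forall>t::real. 0 \<le> t \<and> t \<le> 1 \<longrightarrow>
         (\<forall>l\<in>\<Lambda>. \<mu> (t *\<^sub>R a + (1 - t) *\<^sub>R b) l = t * \<mu> a l + (1 - t) * \<mu> b l)"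
      unfolding \<mu>_def lf_lin by simp
    show "\<forall>e\<in>convex hull (deph_effects \<theta> r0 \<union> {0, mat 1}). \<forall>l\<in>\<Lambda>. 0 \<le> \<xi> e l \<and> \<xi> e l \<le> 1"
    proof (intro ballI)
      fix e l assume h: "e \<in> convex hull (deph_effects \<theta> r0 \<union> {0, mat 1})" "l \<in> \<Lambda>"
      show "0 \<le> \<xi> e l \<and> \<xi> e l \<le> 1"
        using lf_hull[OF xi_gen[OF h(2), unfolded \<xi>_def] h(1)] unfolding \<xi>_def .
    qed
    show "\<forall>a\<in>convex hull (deph_effects \<theta> r0 \<union> {0, mat 1}). \<forall>b\<in>convex hull (deph_effects \<theta> r0 \<union> {0, mat 1}).
         \<forall>t::real. 0 \<le> t \<and> t \<le> 1 \<longrightarrow>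
         (\<forall>l\<in>\<Lambda>. \<xi> (t *\<^sub>R a + (1 - t) *\<^sub>R b) l = t * \<xi> a l + (1 - t) * \<xi> b l)"
      unfolding \<xi>_def lf_lin by simp
    show "\<forall>l\<in>\<Lambda>. \<xi> (mat 1) l = 1"
      unfolding \<xi>_def lf_one \<Lambda>_def xp_def xq_def by simp
    show "\<forall>\<rho>\<in>states \<theta>. \<forall>e\<in>deph_effects \<theta> r0. qtr (e ** \<rho>) = complex_of_real (\<Sum>l\<in>\<Lambda>. \<xi> e l * \<mu> \<rho> l)"
      using repro by blast
  qed
qed


theorem mainTheorem2:
  fixes \<theta> :: real
  assumes "0 < \<theta>" and "\<theta> < pi / 2"
  shows "(1 - (1 - cos \<theta>) / (sin \<theta>)\<^sup>2) \<in> {r \<in> {0..1}. nc_model (states \<theta>) (deph_effects \<theta> r)}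
       \<and> (\<forall>r \<in> {r \<in> {0..1}. nc_model (states \<theta>) (deph_effects \<theta> r)}.
             1 - (1 - cos \<theta>) / (sin \<theta>)\<^sup>2 \<le> r)"
proof -
  have sp: "0 < sin \<theta>" and cp: "0 < cos \<theta>" and c1: "cos \<theta> < 1"
    and sq: "(sin \<theta>)^2 = 1 - (cos \<theta>)^2"
    using trig_facts[OF assms] by auto
  have s2: "0 < (sin \<theta>)^2" using sp by simp
  have q1: "(1 - cos \<theta>) / (sin \<theta>)\<^sup>2 \<le> 1"
  proof -
    have "cos \<theta> * cos \<theta> \<le> cos \<theta>" using cp c1 by (simp add: mult_left_le)
    then have "1 - cos \<theta> \<le> (sin \<theta>)^2" unfolding sq by (simp add: power2_eq_square)
    then show ?thesis using s2 by (simp add: divide_le_eq)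
  qed
  have q0: "0 \<le> (1 - cos \<theta>) / (sin \<theta>)\<^sup>2" using c1 s2 by simp
  have part1: "(1 - (1 - cos \<theta>) / (sin \<theta>)\<^sup>2) \<in> {r \<in> {0..1}. nc_model (states \<theta>) (deph_effects \<theta> r)}"
    using q0 q1 upper[OF assms] by simp
  have part2: "1 - (1 - cos \<theta>) / (sin \<theta>)\<^sup>2 \<le> r"
    if "r \<in> {r \<in> {0..1}. nc_model (states \<theta>) (deph_effects \<theta> r)}" for r
  proof -
    have "(1-r) * sin \<theta> * sin \<theta> + cos \<theta> \<le> 1" using lower[OF assms] that by simp
    then have "(1-r) * (sin \<theta>)^2 \<le> 1 - cos \<theta>" by (simp add: power2_eq_square algebra_simps)
    then have "1 - r \<le> (1 - cos \<theta>) / (sin \<theta>)\<^sup>2" using s2 by (simp add: le_divide_eq)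
    then show ?thesis by simp
  qed
  show ?thesis using part1 part2 by blast
qed

end
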